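(* Let $G$ be the $2\times n$ square lattice graph $P_2\times P_n$ with $n>2$. Then $T_1(G)=3$.
   Context: $P_2\times P_n$ is the Cartesian product of paths on $2$ and $n$ vertices. Fix a set $\Sigma$ of symbols (bond-edge types) and a disjoint copy $\hat\Sigma=\{\hat a:a\in\Sigma\}$ with $\hat{\hat a}=a$; elements of $\Sigma\cup\hat\Sigma$ are cohesive-end types. A tile is a finite multiset of cohesive-end types. A pot is a finite set $P$ of tiles such that whenever $x$ occurs in a tile of $P$, $\hat x$ occurs in some tile of $P$; $\#P$ is its number of tiles. Graphs are finite, loops and multiple edges allowed. An assembly design of a graph $H$ labels the half-edges of $H$ by cohesive-end types so that the two half-edges of each edge receive complementary labels $x,\hat x$; $t_v$ is the multiset of labels at $v$, $P_\lambda(H)=\{t_v\}$, and $P$ realizes $H$ ($H\in\mathcal{O}(P)$) if some assembly design $\lambda$ has $P_\lambda(H)\subseteq P$. $T_1(G)=\min\{\#P: G\in\mathcal{O}(P)\}$. *)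

theory Defs
  imports Main "HOL-Library.Multiset"
begin

text \<open>Cohesive-end types over the bond-edge symbol set Sigma = UNIV :: nat set:
  Plain a stands for a, Hat a for the complementary type.\<close>
datatype cend = Plain nat | Hat nat

fun hat :: "cend \<Rightarrow> cend" where
  "hat (Plain a) = Hat a"
| "hat (Hat a) = Plain a"

type_synonym tile = "cend multiset"

definition is_pot :: "tile set \<Rightarrow> bool" where
  "is_pot P \<longleftrightarrow> finite P \<and>
     (\<forall>t\<in>P. \<forall>x. x \<in># t \<longrightarrow> (\<exists>t'\<in>P. hat x \<in># t'))"

text \<open>Finite multigraphs (loops and multiple edges allowed): edges are identifiers
  with an ordered pair of endpoints. Each edge e has two half-edges: (e, True) at
  fst (ends e) and (e, False) at snd (ends e).\<close>
record ('v, 'e) mgraph =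
  verts :: "'v set"
  edges :: "'e set"
  ends  :: "'e \<Rightarrow> 'v \<times> 'v"

definition wf_mgraph :: "('v, 'e) mgraph \<Rightarrow> bool" where
  "wf_mgraph H \<longleftrightarrow> finite (verts H) \<and> finite (edges H) \<and>
     (\<forall>e\<in>edges H. fst (ends H e) \<in> verts H \<and> snd (ends H e) \<in> verts H)"

definition assembly_design :: "('v, 'e) mgraph \<Rightarrow> ('e \<Rightarrow> bool \<Rightarrow> cend) \<Rightarrow> bool" where
  "assembly_design H lam \<longleftrightarrow> (\<forall>e\<in>edges H. lam e False = hat (lam e True))"

definition tile_at :: "('v, 'e) mgraph \<Rightarrow> ('e \<Rightarrow> bool \<Rightarrow> cend) \<Rightarrow> 'v \<Rightarrow> tile" where
  "tile_at H lam v = (\<Sum>e\<in>edges H.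
      (if fst (ends H e) = v then {#lam e True#} else {#}) +
      (if snd (ends H e) = v then {#lam e False#} else {#}))"

definition pot_of :: "('v, 'e) mgraph \<Rightarrow> ('e \<Rightarrow> bool \<Rightarrow> cend) \<Rightarrow> tile set" where
  "pot_of H lam = tile_at H lam ` verts H"

definition realizes :: "tile set \<Rightarrow> ('v, 'e) mgraph \<Rightarrow> bool" where
  "realizes P H \<longleftrightarrow> (\<exists>lam. assembly_design H lam \<and> pot_of H lam \<subseteq> P)"

definition T1 :: "('v, 'e) mgraph \<Rightarrow> nat" where
  "T1 H = (LEAST k. \<exists>P. is_pot P \<and> realizes P H \<and> card P = k)"

definition ladder :: "nat \<Rightarrow> (nat \<times> nat, (nat \<times> nat) \<times> (nat \<times> nat)) mgraph" where
  "ladder n = \<lparr> verts = {(i, j). i < 2 \<and> j < n},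
     edges = {((i, j), (i', j')). i < 2 \<and> j < n \<and> i' < 2 \<and> j' < n \<and>
                ((i = i' \<and> j' = j + 1) \<or> (j = j' \<and> i = 0 \<and> i' = 1))},
     ends = id \<rparr>"

end

theory Submission
  imports Defs
begin


lemma tile_set:
  assumes "finite (edges H)"
  shows "set_mset (tile_at H lam v) = {lam e True | e. e \<in> edges H \<and> fst (ends H e) = v}
     \<union> {lam e False | e. e \<in> edges H \<and> snd (ends H e) = v}"
  unfolding tile_at_def using assms by (auto simp: set_mset_sum split: if_splits)

lemma tile_size:
  assumes "finite (edges H)"
  shows "size (tile_at H lam v) = card {e\<in>edges H. fst (ends H e) = v} + card {e\<in>edges H. snd (ends H e) = v}"
proof -
  have "size (tile_at H lam v) = (\<Sum>e\<in>edges H. (if fst (ends H e) = v then 1 else 0) + (if snd (ends H e) = v then 1 else 0))"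
    unfolding tile_at_def size_multiset_sum by (intro sum.cong) auto
  also have "\<dots> = (\<Sum>e\<in>edges H. (if fst (ends H e) = v then 1 else 0)) + (\<Sum>e\<in>edges H. (if snd (ends H e) = v then 1 else 0))"
    by (simp add: sum.distrib)
  also have "\<dots> = card {e\<in>edges H. fst (ends H e) = v} + card {e\<in>edges H. snd (ends H e) = v}"
    using assms by (simp add: sum.inter_filter[symmetric])
  finally show ?thesis .
qed

definition phi :: "nat \<Rightarrow> tile \<Rightarrow> int" where
  "phi a M = int (count M (Plain a)) - int (count M (Hat a))"

lemma phi_hat: "phi a {#hat x#} = - phi a {#x#}"
  by (cases x) (auto simp: phi_def)

lemma phi_sum_zero:
  assumes "wf_mgraph H" "assembly_design H lam"
  shows "(\<Sum>v\<in>verts H. phi a (tile_at H lam v)) = 0"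
proof -
  have fin: "finite (verts H)" "finite (edges H)" using assms(1) by (auto simp: wf_mgraph_def)
  have phi_add: "\<And>M N. phi a (M + N) = phi a M + phi a N" by (simp add: phi_def)
  have phi_sum: "\<And>f A. phi a (sum f A) = (\<Sum>x\<in>A. phi a (f x))"
    by (simp add: phi_def count_sum sum_subtractf of_nat_sum)
  have "(\<Sum>v\<in>verts H. phi a (tile_at H lam v)) =
    (\<Sum>v\<in>verts H. \<Sum>e\<in>edges H. (if fst (ends H e) = v then phi a {#lam e True#} else 0) +
          (if snd (ends H e) = v then phi a {#lam e False#} else 0))"
    unfolding tile_at_def phi_sum phi_add by (intro sum.cong refl) (auto simp: phi_def)
  also have "\<dots> = (\<Sum>e\<in>edges H. \<Sum>v\<in>verts H. (if fst (ends H e) = v then phi a {#lam e True#} else 0) +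
          (if snd (ends H e) = v then phi a {#lam e False#} else 0))"
    by (rule sum.swap)
  also have "\<dots> = (\<Sum>e\<in>edges H. phi a {#lam e True#} + phi a {#lam e False#})"
  proof (intro sum.cong refl)
    fix e assume e: "e \<in> edges H"
    then have "fst (ends H e) \<in> verts H" "snd (ends H e) \<in> verts H" using assms(1) by (auto simp: wf_mgraph_def)
    then show "(\<Sum>v\<in>verts H. (if fst (ends H e) = v then phi a {#lam e True#} else 0) +
          (if snd (ends H e) = v then phi a {#lam e False#} else 0)) = phi a {#lam e True#} + phi a {#lam e False#}"
      using fin by (simp add: sum.distrib)
  qed
  also have "\<dots> = 0"
    using assms(2) by (intro sum.neutral) (auto simp: assembly_design_def phi_hat)
  finally show ?thesis .
qed

lemma even_balanced:
  "(\<forall>a. count M (Plain a) = count M (Hat a)) \<Longrightarrow> even (size M)"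
proof (induction "size M" arbitrary: M rule: less_induct)
  case less
  show ?case
  proof (cases "M = {#}")
    case True then show ?thesis by simp
  next
    case False
    then obtain x where x: "x \<in># M" by blast
    have hx: "hat x \<in># M" using less.prems x by (cases x) (metis count_greater_zero_iff hat.simps)+
    have ne: "hat x \<noteq> x" by (cases x) auto
    define M' where "M' = M - {#x, hat x#}"
    have sub: "{#x, hat x#} \<subseteq># M" using x hx ne by (simp add: insert_subset_eq_iff in_diff_count)
    have MM: "M = M' + {#x, hat x#}" unfolding M'_def using sub by (metis subset_mset.diff_add)
    have "\<forall>a. count M' (Plain a) = count M' (Hat a)"
      using less.prems ne unfolding M'_def by (cases x) auto
    moreover have "size M' < size M" using MM by simp
    ultimately have "even (size M')" using less.hyps by blast
    then show ?thesis using MM by simp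
  qed
qed


lemma ladder_fin: "finite (edges (ladder n))"
proof -
  have "edges (ladder n) \<subseteq> ({..<2} \<times> {..<n}) \<times> ({..<2} \<times> {..<n})"
    by (auto simp: ladder_def)
  then show ?thesis by (rule finite_subset) auto
qed

lemma ladder_wf: "wf_mgraph (ladder n)"
  using ladder_fin by (auto simp: wf_mgraph_def ladder_def)

lemma ladder_out: "i < 2 \<Longrightarrow> j < n \<Longrightarrow> {e\<in>edges (ladder n). fst (ends (ladder n) e) = (i,j)} =
   (if j+1<n then {((i,j),(i,j+1))} else {}) \<union> (if i=0 then {((0,j),(1,j))} else {})"
  by (auto simp: ladder_def split: if_splits)

lemma ladder_in: "i < 2 \<Longrightarrow> j < n \<Longrightarrow> {e\<in>edges (ladder n). snd (ends (ladder n) e) = (i,j)} =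
   (if 0<j then {((i,j-1),(i,j))} else {}) \<union> (if i=1 then {((0,j),(1,j))} else {})"
  by (auto simp: ladder_def split: if_splits)

lemma ladder_size:
  assumes "i < 2" "j < n" "n \<ge> 3"
  shows "size (tile_at (ladder n) lam (i,j)) = (if 0<j \<and> j<n-1 then 3 else 2)"
  unfolding tile_size[OF ladder_fin] ladder_out[OF assms(1,2)] ladder_in[OF assms(1,2)]
  using assms by (cases "i = 0"; cases "j = 0"; cases "j+1 < n") auto


lemma ladder_verts_fin: "finite (verts (ladder n))"
proof -
  have "verts (ladder n) \<subseteq> {..<2} \<times> {..<n}" by (auto simp: ladder_def)
  then show ?thesis by (rule finite_subset) auto
qed

lemma two_eq:
  assumes "size M = 2" "x \<in># M" "y \<in># M" "y \<noteq> x"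
  shows "M = {#x, y#}"
proof -
  have sub: "{#x, y#} \<subseteq># M" using assms by (simp add: insert_subset_eq_iff in_diff_count)
  have "size (M - {#x, y#}) = 0" using size_Diff_submset[OF sub] assms(1) by simp
  then have "M - {#x, y#} = {#}" by simp
  then show ?thesis using sub by (metis subset_mset.diff_add add_0)
qed

lemma lower:
  assumes n: "n \<ge> 3" and pot: "is_pot P" and re: "realizes P (ladder n)"
  shows "card P \<ge> 3"
proof (rule ccontr)
  assume "\<not> card P \<ge> 3"
  then have cP: "card P < 3" by simp
  let ?L = "ladder n"
  obtain lam where ad: "assembly_design ?L lam" and sub: "pot_of ?L lam \<subseteq> P"
    using re by (auto simp: realizes_def)
  have finP: "finite P" using pot by (simp add: is_pot_def)
  have tin: "\<And>i j::nat. i < 2 \<Longrightarrow> j < n \<Longrightarrow> tile_at ?L lam (i,j) \<in> P"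
    using sub by (auto simp: pot_of_def ladder_def)
  define t2 where "t2 = tile_at ?L lam (0,0)"
  define t3 where "t3 = tile_at ?L lam (0,1)"
  have s2: "size t2 = 2" unfolding t2_def using n by (subst ladder_size) auto
  have s3: "size t3 = 3" unfolding t3_def using n by (subst ladder_size) auto
  have t2P: "t2 \<in> P" and t3P: "t3 \<in> P" unfolding t2_def t3_def using n tin by auto
  have ne: "t2 \<noteq> t3" using s2 s3 by auto
  have "card {t2, t3} = 2" using ne by simp
  moreover have "{t2, t3} \<subseteq> P" using t2P t3P by simp
  ultimately have "card P \<ge> 2" using finP by (metis card_mono)
  then have "card {t2, t3} = card P" using cP \<open>card {t2, t3} = 2\<close> by simp
  then have Peq: "P = {t2, t3}" using finP \<open>{t2, t3} \<subseteq> P\<close> by (metis card_subset_eq)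
  have corner: "\<And>i j::nat. i < 2 \<Longrightarrow> j < n \<Longrightarrow> \<not> (0 < j \<and> j < n - 1) \<Longrightarrow> tile_at ?L lam (i,j) = t2"
  proof -
    fix i j :: nat assume a: "i < 2" "j < n" "\<not> (0 < j \<and> j < n - 1)"
    have "size (tile_at ?L lam (i,j)) = 2" using a n by (subst ladder_size) auto
    then show "tile_at ?L lam (i,j) = t2" using tin[OF a(1,2)] Peq s3 by auto
  qed
  have middle: "\<And>i j::nat. i < 2 \<Longrightarrow> j < n \<Longrightarrow> 0 < j \<and> j < n - 1 \<Longrightarrow> tile_at ?L lam (i,j) = t3"
  proof -
    fix i j :: nat assume a: "i < 2" "j < n" "0 < j \<and> j < n - 1"
    have "size (tile_at ?L lam (i,j)) = 3" using a n by (subst ladder_size) auto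
    then show "tile_at ?L lam (i,j) = t3" using tin[OF a(1,2)] Peq s2 by auto
  qed
  define e0 :: "(nat \<times> nat) \<times> (nat \<times> nat)" where "e0 = ((0,0),(1,0))"
  have e0E: "e0 \<in> edges ?L" using n by (simp add: ladder_def e0_def)
  define y where "y = lam e0 True"
  have "y \<in># tile_at ?L lam (0,0)"
    unfolding tile_set[OF ladder_fin] y_def using e0E
    by (intro UnI1 CollectI exI[of _ e0]) (simp add: ladder_def e0_def)
  then have y2: "y \<in># t2" by (simp add: t2_def)
  have "hat y \<in># tile_at ?L lam (1,0)"
    unfolding tile_set[OF ladder_fin] y_def using e0E ad
    by (intro UnI2 CollectI exI[of _ e0]) (simp add: ladder_def e0_def assembly_design_def)
  then have hy2: "hat y \<in># t2" using corner[of 1 0] n by simp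
  have "hat y \<noteq> y" by (cases y) auto
  then have t2eq: "t2 = {#y, hat y#}" using two_eq[OF s2 y2 hy2] by simp
  have ph2: "\<And>a. phi a t2 = 0" unfolding t2eq by (cases y) (auto simp: phi_def)
  let ?V = "verts ?L"
  let ?M = "{v\<in>?V. 0 < snd v \<and> snd v < n - 1}"
  have bal: "\<And>a. phi a t3 = 0"
  proof -
    fix a
    have "(\<Sum>v\<in>?V. phi a (tile_at ?L lam v)) = (\<Sum>v\<in>?V. if 0 < snd v \<and> snd v < n - 1 then phi a t3 else 0)"
    proof (intro sum.cong refl)
      fix v assume "v \<in> ?V"
      then obtain i j where v: "v = (i,j)" "i < 2" "j < n" by (auto simp: ladder_def)
      show "phi a (tile_at ?L lam v) = (if 0 < snd v \<and> snd v < n - 1 then phi a t3 else 0)"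
        using corner[OF v(2,3)] middle[OF v(2,3)] ph2 v(1) by auto
    qed
    also have "\<dots> = of_nat (card ?M) * phi a t3"
      using ladder_verts_fin by (simp add: sum.inter_filter[symmetric])
    finally have "of_nat (card ?M) * phi a t3 = 0"
      using phi_sum_zero[OF ladder_wf ad] by simp
    moreover have "(0,1) \<in> ?M" using n by (auto simp: ladder_def)
    then have "card ?M > 0" using ladder_verts_fin by (metis (no_types, lifting) card_gt_0_iff empty_iff finite_subset mem_Collect_eq subsetI)
    ultimately show "phi a t3 = 0" by simp
  qed
  have "even (size t3)"
    using bal by (intro even_balanced) (auto simp: phi_def)
  then show False using s3 by simp
qed


definition sgn3 :: "nat \<times> nat \<Rightarrow> cend" where
  "sgn3 v = (if odd (fst v + snd v) then Plain 0 else Hat 0)"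

definition lab3 :: "nat \<Rightarrow> nat \<times> nat \<Rightarrow> (nat \<times> nat) \<times> (nat \<times> nat) \<Rightarrow> cend" where
  "lab3 n v e = (if 0 < snd v \<and> snd v < n - 1 then sgn3 v
      else if snd (fst e) = snd (snd e) then hat (sgn3 v) else sgn3 v)"

definition lam3 :: "nat \<Rightarrow> (nat \<times> nat) \<times> (nat \<times> nat) \<Rightarrow> bool \<Rightarrow> cend" where
  "lam3 n e b = (if b then lab3 n (fst e) e else hat (lab3 n (fst e) e))"

lemma hat_hat[simp]: "hat (hat x) = x" by (cases x) auto

lemma consist:
  assumes n: "n \<ge> 3" and e: "e \<in> edges (ladder n)"
  shows "hat (lab3 n (fst e) e) = lab3 n (snd e) e"
  using e n by (auto simp: ladder_def lab3_def sgn3_def)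

lemma ad3: "assembly_design (ladder n) (lam3 n)"
  by (simp add: assembly_design_def lam3_def)

lemma tile3_set:
  assumes n: "n \<ge> 3"
  shows "set_mset (tile_at (ladder n) (lam3 n) v) =
     {lab3 n v e | e. e \<in> edges (ladder n) \<and> (fst e = v \<or> snd e = v)}"
proof -
  have en: "\<And>e. ends (ladder n) e = e" by (simp add: ladder_def)
  have lf: "\<And>e. e \<in> edges (ladder n) \<Longrightarrow> lam3 n e False = lab3 n (snd e) e"
    using consist[OF n] by (simp add: lam3_def)
  have lt: "\<And>e. lam3 n e True = lab3 n (fst e) e" by (simp add: lam3_def)
  show ?thesis unfolding tile_set[OF ladder_fin] en
    using lf lt by (auto; metis)
qed


definition P3 :: "tile set" where
  "P3 = {replicate_mset 3 (Plain 0), replicate_mset 3 (Hat 0), {#Plain 0, Hat 0#}}"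

lemma P3_pot: "is_pot P3"
  unfolding is_pot_def P3_def by auto

lemma P3_card: "card P3 = 3"
proof -
  have d1: "replicate_mset 3 (Plain 0) \<noteq> replicate_mset 3 (Hat 0)"
  proof
    assume "replicate_mset 3 (Plain 0) = replicate_mset 3 (Hat 0)"
    then have "count (replicate_mset 3 (Plain 0)) (Plain 0) = count (replicate_mset 3 (Hat 0)) (Plain 0)" by simp
    then show False by simp
  qed
  have d2: "replicate_mset 3 (Plain 0) \<noteq> {#Plain 0, Hat 0#}"
  proof
    assume "replicate_mset 3 (Plain 0) = {#Plain 0, Hat 0#}"
    then have "size (replicate_mset 3 (Plain 0)) = size {#Plain 0, Hat 0#}" by simp
    then show False by simp
  qed
  have d3: "replicate_mset 3 (Hat 0) \<noteq> {#Plain 0, Hat 0#}"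
  proof
    assume "replicate_mset 3 (Hat 0) = {#Plain 0, Hat 0#}"
    then have "size (replicate_mset 3 (Hat 0)) = size {#Plain 0, Hat 0#}" by simp
    then show False by simp
  qed
  show ?thesis unfolding P3_def using d1 d2 d3 by simp
qed

lemma tile3_in:
  assumes n: "n \<ge> 3" and v: "i < 2" "j < n"
  shows "tile_at (ladder n) (lam3 n) (i,j) \<in> P3"
proof (cases "0 < j \<and> j < n - 1")
  case True
  have "set_mset (tile_at (ladder n) (lam3 n) (i,j)) \<subseteq> {sgn3 (i,j)}"
    unfolding tile3_set[OF n] using True by (auto simp: lab3_def)
  from set_mset_subset_singletonD[OF this]
  have "tile_at (ladder n) (lam3 n) (i,j) = replicate_mset 3 (sgn3 (i,j))"
    using ladder_size[OF v n] True by simp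
  then show ?thesis by (simp add: P3_def sgn3_def)
next
  case False
  have sz: "size (tile_at (ladder n) (lam3 n) (i,j)) = 2"
    using ladder_size[OF v n] False by simp
  define eh :: "(nat \<times> nat) \<times> (nat \<times> nat)" where
    "eh = (if j = 0 then ((i,0),(i,1)) else ((i,n-2),(i,n-1)))"
  have ehE: "eh \<in> edges (ladder n) \<and> (fst eh = (i,j) \<or> snd eh = (i,j))"
    using False n v unfolding eh_def by (auto simp: ladder_def)
  have "lab3 n (i,j) eh = sgn3 (i,j)"
    using False n unfolding eh_def lab3_def by auto
  then have h1: "sgn3 (i,j) \<in># tile_at (ladder n) (lam3 n) (i,j)"
    unfolding tile3_set[OF n] mem_Collect_eq using ehE by (intro exI[of _ eh]) simp
  define ev :: "(nat \<times> nat) \<times> (nat \<times> nat)" where "ev = ((0,j),(1,j))"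
  have evE: "ev \<in> edges (ladder n) \<and> (fst ev = (i,j) \<or> snd ev = (i,j))"
    using v unfolding ev_def by (auto simp: ladder_def)
  have "lab3 n (i,j) ev = hat (sgn3 (i,j))"
    using False unfolding ev_def lab3_def by auto
  then have h2: "hat (sgn3 (i,j)) \<in># tile_at (ladder n) (lam3 n) (i,j)"
    unfolding tile3_set[OF n] mem_Collect_eq using evE by (intro exI[of _ ev]) simp
  have "hat (sgn3 (i,j)) \<noteq> sgn3 (i,j)" by (simp add: sgn3_def)
  from two_eq[OF sz h1 h2 this]
  show ?thesis by (auto simp: P3_def sgn3_def add_mset_commute)
qed

lemma upper:
  assumes n: "n \<ge> 3"
  shows "realizes P3 (ladder n)"
  unfolding realizes_def
proof (intro exI conjI)
  show "assembly_design (ladder n) (lam3 n)" by (rule ad3)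
  show "pot_of (ladder n) (lam3 n) \<subseteq> P3"
    unfolding pot_of_def using tile3_in[OF n] by (auto simp: ladder_def)
qed

theorem proposition7:
  fixes n :: nat
  assumes "n > 2"
  shows "T1 (ladder n) = 3"
proof -
  have n: "n \<ge> 3" using assms by simp
  show ?thesis
    unfolding T1_def
  proof (rule Least_equality)
    show "\<exists>P. is_pot P \<and> realizes P (ladder n) \<and> card P = 3"
      using P3_pot P3_card upper[OF n] by blast
    show "\<And>k. \<exists>P. is_pot P \<and> realizes P (ladder n) \<and> card P = k \<Longrightarrow> 3 \<le> k"
      using lower[OF n] by blast
  qed
qed

end
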